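(* The function $h$ is well defined (distinct sequences $(\alpha_n)$ with $\alpha_n\in\Theta$ give distinct points of $D(h)$, each point of $D(h)$ having a unique nega-$q$-ary representation), $h$ is a bijection from $D(h)$ onto $E(h)=\{\Delta^{-q}_{\alpha_1\alpha_2\ldots}:\alpha_n\in\Theta\}$, and $h$ is continuous at every point of $D(h)$.
   Context: Let $q>3$ be an integer, fix $u\in\{0,1,\ldots,q-1\}$, and put $\Theta=\{1,2,\ldots,q-1\}\setminus\{u\}$. The nega-$q$-ary representation is $\Delta^{-q}_{\beta_1\beta_2\ldots}=\sum_{k\ge1}\frac{\beta_k}{(-q)^k}$, $\beta_k\in\{0,\ldots,q-1\}$. For a sequence $(\alpha_n)_{n\ge1}$ with $\alpha_n\in\Theta$, let $x((\alpha_n))$ be the number whose nega-$q$-ary digit string is the concatenation of the blocks $\underbrace{u\ldots u}_{\alpha_n-1}\alpha_n$ ($\alpha_n-1$ copies of $u$ followed by the digit $\alpha_n$), $n=1,2,\ldots$; equivalently $x=-\frac{u}{q+1}+\sum_{n\ge1}\frac{\alpha_n-u}{(-q)^{\alpha_1+\cdots+\alpha_n}}$. Let $D(h)$ be the set of all such $x$, and define $h:D(h)\to\mathbb R$ by $h(x)=\Delta^{-q}_{\alpha_1\alpha_2\ldots}=\sum_{n\ge1}\frac{\alpha_n}{(-q)^n}$. *)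

theory Defs
  imports "HOL-Analysis.Analysis"
begin

text \<open>Digit sequences are 0-indexed: beta 0 is the first digit beta_1.
  Nega-q-ary value of a digit sequence.\<close>
definition negaq :: "nat \<Rightarrow> (nat \<Rightarrow> nat) \<Rightarrow> real" where
  "negaq q \<beta> = (\<Sum>k. real (\<beta> k) / (- real q) ^ (Suc k))"

definition Theta :: "nat \<Rightarrow> nat \<Rightarrow> nat set" where
  "Theta q u = {1..q-1} - {u}"

definition Seqs :: "nat \<Rightarrow> nat \<Rightarrow> (nat \<Rightarrow> nat) set" where
  "Seqs q u = {\<alpha>. \<forall>n. \<alpha> n \<in> Theta q u}"

definition psum :: "(nat \<Rightarrow> nat) \<Rightarrow> nat \<Rightarrow> nat" where
  "psum \<alpha> n = (\<Sum>i<n. \<alpha> i)"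

text \<open>Concatenation of the blocks u...u alpha_n (alpha_n - 1 copies of u, then alpha_n):
  the digit at (1-based) position p is alpha_n if p = alpha_1+...+alpha_n, and u otherwise.
  Here index k (0-based) corresponds to position k+1.\<close>
definition blockdigits :: "nat \<Rightarrow> (nat \<Rightarrow> nat) \<Rightarrow> nat \<Rightarrow> nat" where
  "blockdigits u \<alpha> k =
     (if \<exists>n. psum \<alpha> (Suc n) = Suc k then \<alpha> (LEAST n. psum \<alpha> (Suc n) = Suc k) else u)"

definition xval :: "nat \<Rightarrow> nat \<Rightarrow> (nat \<Rightarrow> nat) \<Rightarrow> real" where
  "xval q u \<alpha> = negaq q (blockdigits u \<alpha>)"

definition Dh :: "nat \<Rightarrow> nat \<Rightarrow> real set" where
  "Dh q u = xval q u ` Seqs q u"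

definition Eh :: "nat \<Rightarrow> nat \<Rightarrow> real set" where
  "Eh q u = negaq q ` Seqs q u"

definition h :: "nat \<Rightarrow> nat \<Rightarrow> real \<Rightarrow> real" where
  "h q u x = negaq q (THE \<alpha>. \<alpha> \<in> Seqs q u \<and> xval q u \<alpha> = x)"

end

theory Submission
  imports Defs
begin

definition dig :: "nat \<Rightarrow> (nat \<Rightarrow> nat) \<Rightarrow> bool" where
  "dig q s \<longleftrightarrow> (\<forall>j. s j < q)"

definition smax :: "nat \<Rightarrow> nat \<Rightarrow> nat" where
  "smax q j = (if odd j then q - 1 else 0)"
definition smin :: "nat \<Rightarrow> nat \<Rightarrow> nat" where
  "smin q j = (if even j then q - 1 else 0)"

lemma dig_smax: "q > 1 \<Longrightarrow> dig q (smax q)" by (auto simp: dig_def smax_def)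
lemma dig_smin: "q > 1 \<Longrightarrow> dig q (smin q)" by (auto simp: dig_def smin_def)

lemma summ:
  assumes "dig q s" "q > 1"
  shows "summable (\<lambda>k. real (s k) / (- real q) ^ Suc k)"
proof (rule summable_comparison_test')
  show "summable (\<lambda>k. real q * (1 / real q) ^ Suc k)"
    using assms(2) by (intro summable_mult summable_ignore_initial_segment[where k=1, simplified]
       summable_geometric) auto
  fix n :: nat
  have "real (s n) \<le> real q" using assms(1) unfolding dig_def by (simp add: less_imp_le)
  then show "norm (real (s n) / (- real q) ^ Suc n) \<le> real q * (1 / real q) ^ Suc n"
  proof -
    have "real (s n) / (real q * real q ^ n) \<le> real q / (real q * real q ^ n)"
      by (rule divide_right_mono) (use \<open>real (s n) \<le> real q\<close> in auto)
    then show ?thesis using assms(2) by (simp add: abs_mult power_abs power_divide)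
  qed
qed

lemma split:
  assumes "dig q s" "q > 1"
  shows "negaq q s = (\<Sum>i<N. real (s i) / (- real q) ^ Suc i)
     + negaq q (\<lambda>i. s (i + N)) / (- real q) ^ N"
proof -
  have dN: "dig q (\<lambda>i. s (i + N))" using assms(1) by (simp add: dig_def)
  have "negaq q s = (\<Sum>n. real (s (n + N)) / (- real q) ^ Suc (n + N)) + (\<Sum>i<N. real (s i) / (- real q) ^ Suc i)"
    unfolding negaq_def using suminf_split_initial_segment[OF summ[OF assms]] by simp
  also have "(\<Sum>n. real (s (n + N)) / (- real q) ^ Suc (n + N)) = (\<Sum>n. real (s (n + N)) / (- real q) ^ Suc n / (- real q) ^ N)"
    by (intro suminf_cong) (simp add: power_add)
  also have "\<dots> = negaq q (\<lambda>i. s (i + N)) / (- real q) ^ N"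
    unfolding negaq_def by (rule suminf_divide[OF summ[OF dN assms(2)]])
  finally show ?thesis by simp
qed

lemma maxmin: assumes "q > 1" shows "negaq q (smax q) - negaq q (smin q) = 1"
proof -
  have "negaq q (smax q) - negaq q (smin q) = (\<Sum>k. real (smax q k) / (- real q) ^ Suc k - real (smin q k) / (- real q) ^ Suc k)"
    unfolding negaq_def by (rule suminf_diff[OF summ[OF dig_smax] summ[OF dig_smin]]) (use assms in auto)
  also have "\<dots> = (\<Sum>k. (real q - 1) / real q * (1 / real q) ^ k)"
  proof (rule suminf_cong)
    fix k
    have q1: "real (q - 1) = real q - 1" using assms by simp
    show "real (smax q k) / (- real q) ^ Suc k - real (smin q k) / (- real q) ^ Suc k = (real q - 1) / real q * (1 / real q) ^ k"
      using assms by (cases "even k") (auto simp: smax_def smin_def q1 power_minus' power_divide field_simps)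
  qed
  also have "\<dots> = (real q - 1) / real q * (1 / (1 - 1 / real q))"
    using assms by (subst suminf_mult) (auto simp: suminf_geometric)
  also have "\<dots> = 1" using assms by (simp add: field_simps)
  finally show ?thesis .
qed

lemma tm: "real c / (- real q) ^ Suc j = (if even j then - (real c / real q ^ Suc j) else real c / real q ^ Suc j)"
  by (simp add: power_minus')

lemma le_max:
  assumes "dig q s" "q > 1"
  shows "negaq q s \<le> negaq q (smax q)"
  unfolding negaq_def
proof (rule suminf_le[OF _ summ[OF assms] summ[OF dig_smax[OF assms(2)] assms(2)]])
  fix j
  have "s j \<le> q - 1" using assms unfolding dig_def by (metis Suc_pred' less_Suc_eq_le less_trans zero_less_one)
  then have "real (s j) \<le> real (q - 1)" by simp
  then show "real (s j) / (- real q) ^ Suc j \<le> real (smax q j) / (- real q) ^ Suc j"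
    by (simp only: tm) (auto simp: smax_def divide_right_mono)
qed

lemma ge_min:
  assumes "dig q s" "q > 1"
  shows "negaq q (smin q) \<le> negaq q s"
  unfolding negaq_def
proof (rule suminf_le[OF _ summ[OF dig_smin[OF assms(2)] assms(2)] summ[OF assms]])
  fix j
  have "s j \<le> q - 1" using assms unfolding dig_def by (metis Suc_pred' less_Suc_eq_le less_trans zero_less_one)
  then have "real (s j) \<le> real (q - 1)" by simp
  then show "real (smin q j) / (- real q) ^ Suc j \<le> real (s j) / (- real q) ^ Suc j"
    by (simp only: tm) (auto simp: smin_def divide_right_mono)
qed

lemma lt_max:
  assumes "dig q s" "q > 1" "(even i \<and> s i > 0) \<or> (odd i \<and> s i < q - 1)"
  shows "negaq q s < negaq q (smax q)"
proof -
  have S1: "summable (\<lambda>k. real (smax q k) / (- real q) ^ Suc k)" by (rule summ[OF dig_smax[OF assms(2)] assms(2)])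
  have S2: "summable (\<lambda>k. real (s k) / (- real q) ^ Suc k)" by (rule summ[OF assms(1,2)])
  have "0 < (\<Sum>k. real (smax q k) / (- real q) ^ Suc k - real (s k) / (- real q) ^ Suc k)"
  proof (subst suminf_pos_iff)
    show "summable (\<lambda>k. real (smax q k) / (- real q) ^ Suc k - real (s k) / (- real q) ^ Suc k)"
      using S1 S2 by (rule summable_diff)
    fix n
    have "s n \<le> q - 1" using assms unfolding dig_def by (metis Suc_pred' less_Suc_eq_le less_trans zero_less_one)
    then have "real (s n) \<le> real (q - 1)" by simp
    then show "0 \<le> real (smax q n) / (- real q) ^ Suc n - real (s n) / (- real q) ^ Suc n"
      by (simp only: tm) (auto simp: smax_def divide_right_mono)
  next
    have "real (s i) < real (q - 1) \<or> even i" using assms(3) by auto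
    show "\<exists>i. 0 < real (smax q i) / (- real q) ^ Suc i - real (s i) / (- real q) ^ Suc i"
      apply (rule exI[of _ i])
      using assms(2,3) by (simp only: tm) (auto simp: smax_def divide_strict_right_mono)
  qed
  then show ?thesis unfolding negaq_def using suminf_diff[OF S1 S2] by linarith
qed

lemma gt_min:
  assumes "dig q s" "q > 1" "(even i \<and> s i < q - 1) \<or> (odd i \<and> s i > 0)"
  shows "negaq q (smin q) < negaq q s"
proof -
  have S1: "summable (\<lambda>k. real (smin q k) / (- real q) ^ Suc k)" by (rule summ[OF dig_smin[OF assms(2)] assms(2)])
  have S2: "summable (\<lambda>k. real (s k) / (- real q) ^ Suc k)" by (rule summ[OF assms(1,2)])
  have "0 < (\<Sum>k. real (s k) / (- real q) ^ Suc k - real (smin q k) / (- real q) ^ Suc k)"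
  proof (subst suminf_pos_iff)
    show "summable (\<lambda>k. real (s k) / (- real q) ^ Suc k - real (smin q k) / (- real q) ^ Suc k)"
      using S2 S1 by (rule summable_diff)
    fix n
    have "s n \<le> q - 1" using assms unfolding dig_def by (metis Suc_pred' less_Suc_eq_le less_trans zero_less_one)
    then have "real (s n) \<le> real (q - 1)" by simp
    then show "0 \<le> real (s n) / (- real q) ^ Suc n - real (smin q n) / (- real q) ^ Suc n"
      by (simp only: tm) (auto simp: smin_def divide_right_mono)
  next
    show "\<exists>i. 0 < real (s i) / (- real q) ^ Suc i - real (smin q i) / (- real q) ^ Suc i"
      apply (rule exI[of _ i])
      using assms(2,3) by (simp only: tm) (auto simp: smin_def divide_strict_right_mono)
  qed
  then show ?thesis unfolding negaq_def using suminf_diff[OF S2 S1] by linarith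
qed

definition good :: "nat \<Rightarrow> (nat \<Rightarrow> nat) \<Rightarrow> bool" where
  "good q s \<longleftrightarrow> (\<forall>m. \<exists>j\<ge>m. s j = s (Suc j) \<or> (0 < s j \<and> s j < q - 1))"

lemma good_tail: "good q s \<Longrightarrow> good q (\<lambda>i. s (i + N))"
  unfolding good_def
proof
  fix m assume "\<forall>m. \<exists>j\<ge>m. s j = s (Suc j) \<or> 0 < s j \<and> s j < q - 1"
  then obtain j where "j \<ge> m + N" "s j = s (Suc j) \<or> 0 < s j \<and> s j < q - 1" by blast
  then show "\<exists>j\<ge>m. s (j + N) = s (Suc j + N) \<or> 0 < s (j + N) \<and> s (j + N) < q - 1"
    by (intro exI[of _ "j - N"]) auto
qed

lemma strict:
  assumes "dig q s" "good q s" "q > 3"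
  shows "negaq q (smin q) < negaq q s \<and> negaq q s < negaq q (smax q)"
proof -
  have q1: "q > 1" using assms by simp
  obtain j where j: "s j = s (Suc j) \<or> 0 < s j \<and> s j < q - 1" using assms(2) unfolding good_def by blast
  show ?thesis
  proof (cases "0 < s j \<and> s j < q - 1")
    case True
    then show ?thesis using lt_max[OF assms(1) q1, of j] gt_min[OF assms(1) q1, of j] by auto
  next
    case False
    then have e: "s j = s (Suc j)" using j by blast
    have sl: "s j \<le> q - 1" using assms(1) q1 unfolding dig_def by (metis Suc_pred' less_Suc_eq_le less_trans zero_less_one)
    have mx: "negaq q s < negaq q (smax q)"
    proof (cases "s j = 0")
      case True
      then show ?thesis using assms(3) e by (cases "even j") (auto intro: lt_max[OF assms(1) q1, of j] lt_max[OF assms(1) q1, of "Suc j"])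
    next
      case False
      then show ?thesis using assms(3) e by (cases "even j") (auto intro: lt_max[OF assms(1) q1, of j] lt_max[OF assms(1) q1, of "Suc j"])
    qed
    have mn: "negaq q (smin q) < negaq q s"
    proof (cases "s j = 0")
      case True
      then show ?thesis using assms(3) e by (cases "even j") (auto intro: gt_min[OF assms(1) q1, of j] gt_min[OF assms(1) q1, of "Suc j"])
    next
      case False
      then show ?thesis using assms(3) e by (cases "even j") (auto intro: gt_min[OF assms(1) q1, of j] gt_min[OF assms(1) q1, of "Suc j"])
    qed
    show ?thesis using mx mn by simp
  qed
qed

definition gap :: "nat \<Rightarrow> (nat \<Rightarrow> nat) \<Rightarrow> real" where
  "gap q s = min (negaq q s - negaq q (smin q)) (negaq q (smax q) - negaq q s)"

lemma gap_pos: "dig q s \<Longrightarrow> good q s \<Longrightarrow> q > 3 \<Longrightarrow> gap q s > 0"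
  using strict unfolding gap_def by fastforce

lemma gap_le:
  assumes "dig q a" "dig q b" "q > 1" "\<forall>i<k. a i = b i" "a k \<noteq> b k"
  shows "gap q (\<lambda>i. a (i + Suc k)) / real q ^ Suc k \<le> \<bar>negaq q a - negaq q b\<bar>"
proof -
  define A where "A = negaq q (\<lambda>i. a (i + Suc k))"
  define B where "B = negaq q (\<lambda>i. b (i + Suc k))"
  define d where "d = real (a k) - real (b k)"
  have da: "dig q (\<lambda>i. a (i + Suc k))" "dig q (\<lambda>i. b (i + Suc k))" using assms(1,2) by (auto simp: dig_def)
  have sa: "(\<Sum>i<Suc k. real (a i) / (- real q) ^ Suc i) = (\<Sum>i<k. real (b i) / (- real q) ^ Suc i) + real (a k) / (- real q) ^ Suc k"
    using assms(4) by simp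
  have sb: "(\<Sum>i<Suc k. real (b i) / (- real q) ^ Suc i) = (\<Sum>i<k. real (b i) / (- real q) ^ Suc i) + real (b k) / (- real q) ^ Suc k"
    by simp
  have "negaq q a - negaq q b = (d + A - B) / (- real q) ^ Suc k"
    using split[OF assms(1,3), of "Suc k"] split[OF assms(2,3), of "Suc k"] sa sb
    unfolding A_def B_def d_def by (simp add: diff_divide_distrib add_divide_distrib)
  moreover have "\<bar>(- real q) ^ Suc k\<bar> = real q ^ Suc k" by (simp only: power_abs) simp
  ultimately have eq: "\<bar>negaq q a - negaq q b\<bar> = \<bar>d + A - B\<bar> / real q ^ Suc k"
    by (simp only: abs_divide)
  have M: "negaq q (smax q) - negaq q (smin q) = 1" by (rule maxmin[OF assms(3)])
  have B1: "negaq q (smin q) \<le> B" "B \<le> negaq q (smax q)" unfolding B_def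
    using ge_min[OF da(2) assms(3)] le_max[OF da(2) assms(3)] by auto
  have "d \<ge> 1 \<or> d \<le> -1" unfolding d_def using assms(5) by linarith
  then have "gap q (\<lambda>i. a (i + Suc k)) \<le> \<bar>d + A - B\<bar>"
    unfolding gap_def A_def[symmetric] using M B1 by (auto simp: min_def abs_if)
  then show ?thesis unfolding eq using assms(3) by (simp add: divide_right_mono)
qed

lemma close:
  assumes "dig q a" "dig q b" "q > 1" "\<forall>i<N. a i = b i"
  shows "\<bar>negaq q a - negaq q b\<bar> \<le> 1 / real q ^ N"
proof -
  define A where "A = negaq q (\<lambda>i. a (i + N))"
  define B where "B = negaq q (\<lambda>i. b (i + N))"
  have da: "dig q (\<lambda>i. a (i + N))" "dig q (\<lambda>i. b (i + N))" using assms(1,2) by (auto simp: dig_def)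
  have sa: "(\<Sum>i<N. real (a i) / (- real q) ^ Suc i) = (\<Sum>i<N. real (b i) / (- real q) ^ Suc i)"
    using assms(4) by simp
  have "negaq q a - negaq q b = (A - B) / (- real q) ^ N"
    using split[OF assms(1,3), of N] split[OF assms(2,3), of N] sa
    unfolding A_def B_def by (simp add: diff_divide_distrib)
  moreover have "\<bar>(- real q) ^ N\<bar> = real q ^ N" by (simp only: power_abs) simp
  ultimately have eq: "\<bar>negaq q a - negaq q b\<bar> = \<bar>A - B\<bar> / real q ^ N"
    by (simp only: abs_divide)
  have M: "negaq q (smax q) - negaq q (smin q) = 1" by (rule maxmin[OF assms(3)])
  have "\<bar>A - B\<bar> \<le> 1" unfolding A_def B_def
    using ge_min[OF da(2) assms(3)] le_max[OF da(2) assms(3)] ge_min[OF da(1) assms(3)] le_max[OF da(1) assms(3)] M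
    by linarith
  then show ?thesis unfolding eq using assms(3) by (simp add: divide_right_mono)
qed

lemma uniq:
  assumes "dig q a" "good q a" "dig q b" "q > 3" "negaq q a = negaq q b"
  shows "a = b"
proof (rule ccontr)
  assume "a \<noteq> b"
  then have ex: "\<exists>k. a k \<noteq> b k" by auto
  define k where "k = (LEAST k. a k \<noteq> b k)"
  have k1: "a k \<noteq> b k" unfolding k_def using LeastI_ex[OF ex] .
  have k2: "\<forall>i<k. a i = b i" unfolding k_def using not_less_Least by blast
  have "dig q (\<lambda>i. a (i + Suc k))" using assms(1) by (auto simp: dig_def)
  then have "gap q (\<lambda>i. a (i + Suc k)) > 0" using gap_pos good_tail[OF assms(2)] assms(4) by blast
  moreover have "gap q (\<lambda>i. a (i + Suc k)) / real q ^ Suc k \<le> \<bar>negaq q a - negaq q b\<bar>"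
    using gap_le[OF assms(1,3) _ k2 k1] assms(4) by simp
  moreover have "real q ^ Suc k > 0" using assms(4) by simp
  ultimately show False using assms(5) by (metis abs_zero cancel_comm_monoid_add_class.diff_cancel divide_pos_pos not_le)
qed

lemma sep:
  assumes "dig q a" "good q a" "q > 3"
  shows "\<exists>\<delta>>0. \<forall>b. dig q b \<and> \<bar>negaq q b - negaq q a\<bar> < \<delta> \<longrightarrow> (\<forall>i<M. b i = a i)"
proof (induction M)
  case 0
  then show ?case by (intro exI[of _ 1]) auto
next
  case (Suc M)
  then obtain \<delta> where d: "\<delta> > 0" "\<forall>b. dig q b \<and> \<bar>negaq q b - negaq q a\<bar> < \<delta> \<longrightarrow> (\<forall>i<M. b i = a i)" by blast
  define g where "g = gap q (\<lambda>i. a (i + Suc M)) / real q ^ Suc M"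
  have "dig q (\<lambda>i. a (i + Suc M))" using assms(1) by (auto simp: dig_def)
  then have "gap q (\<lambda>i. a (i + Suc M)) > 0" using gap_pos good_tail[OF assms(2)] assms(3) by blast
  moreover have "real q ^ Suc M > 0" using assms(3) by simp
  ultimately have gp: "g > 0" unfolding g_def by (rule divide_pos_pos)
  show ?case
  proof (intro exI[of _ "min \<delta> g"] conjI allI impI)
    show "0 < min \<delta> g" using d gp by simp
    fix b i assume b: "dig q b \<and> \<bar>negaq q b - negaq q a\<bar> < min \<delta> g" and i: "i < Suc M"
    then have bM: "\<forall>i<M. a i = b i" using d by auto
    have "a M = b M"
    proof (rule ccontr)
      assume "a M \<noteq> b M"
      then have "g \<le> \<bar>negaq q a - negaq q b\<bar>" unfolding g_def
        using gap_le[OF assms(1) _ _ bM] b assms(3) by simp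
      then show False using b by (simp add: abs_minus_commute)
    qed
    then show "b i = a i" using bM i by (metis less_Suc_eq)
  qed
qed


lemma psum_Suc: "psum \<alpha> (Suc n) = psum \<alpha> n + \<alpha> n" by (simp add: psum_def)
lemma psum_0: "psum \<alpha> 0 = 0" by (simp add: psum_def)

lemma SeqsD: assumes "\<alpha> \<in> Seqs q u" shows "1 \<le> \<alpha> n" "\<alpha> n \<le> q - 1" "\<alpha> n \<noteq> u"
  using assms by (auto simp: Seqs_def Theta_def)

lemma psum_strict: "(\<forall>i. \<alpha> i \<ge> 1) \<Longrightarrow> m < n \<Longrightarrow> psum \<alpha> m < psum \<alpha> n"
proof (induction n)
  case 0 then show ?case by simp
next
  case (Suc n)
  have "psum \<alpha> n < psum \<alpha> (Suc n)" using Suc.prems(1) by (simp add: psum_Suc) (metis One_nat_def Suc_le_eq)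
  then show ?case using Suc by (metis less_Suc_eq order.strict_trans)
qed

lemma psum_mono: "(\<forall>i. \<alpha> i \<ge> 1) \<Longrightarrow> m \<le> n \<Longrightarrow> psum \<alpha> m \<le> psum \<alpha> n"
  using psum_strict by (metis le_less)

lemma psum_ge: "(\<forall>i. \<alpha> i \<ge> 1) \<Longrightarrow> n \<le> psum \<alpha> n"
proof (induction n)
  case 0 then show ?case by simp
next
  case (Suc n)
  then have "1 \<le> \<alpha> n" "n \<le> psum \<alpha> n" by auto
  then show ?case by (simp add: psum_Suc)
qed

lemma blk:
  assumes a: "\<forall>i. \<alpha> i \<ge> 1" and k: "psum \<alpha> n \<le> k" "k < psum \<alpha> (Suc n)"
  shows "blockdigits u \<alpha> k = (if Suc k = psum \<alpha> (Suc n) then \<alpha> n else u)"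
proof (cases "Suc k = psum \<alpha> (Suc n)")
  case True
  have L: "(LEAST n'. psum \<alpha> (Suc n') = Suc k) = n"
  proof (rule Least_equality)
    show "psum \<alpha> (Suc n) = Suc k" using True by simp
    fix y assume "psum \<alpha> (Suc y) = Suc k"
    then show "n \<le> y" using True psum_strict[OF a, of "Suc y" "Suc n"] by (metis Suc_less_eq less_irrefl not_le_imp_less)
  qed
  have ex: "\<exists>n'. psum \<alpha> (Suc n') = Suc k" using True by metis
  show ?thesis unfolding blockdigits_def by (simp only: if_P[OF ex] L) (simp add: True)
next
  case False
  have "\<not> (\<exists>n'. psum \<alpha> (Suc n') = Suc k)"
  proof
    assume "\<exists>n'. psum \<alpha> (Suc n') = Suc k"
    then obtain n' where n': "psum \<alpha> (Suc n') = Suc k" by blast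
    consider "n' < n" | "n' = n" | "n' > n" by linarith
    then show False
    proof cases
      case 1 then show ?thesis using psum_mono[OF a, of "Suc n'" n] n' k by linarith
    next
      case 2 then show ?thesis using False n' by simp
    next
      case 3 then show ?thesis using psum_strict[OF a, of "Suc n" "Suc n'"] n' k by linarith
    qed
  qed
  then show ?thesis unfolding blockdigits_def using False by simp
qed

lemma cover: "\<forall>i. \<alpha> i \<ge> 1 \<Longrightarrow> \<exists>n. psum \<alpha> n \<le> k \<and> k < psum \<alpha> (Suc n)"
proof (induction k)
  case 0
  then show ?case by (intro exI[of _ 0]) (auto simp: psum_Suc psum_0 Suc_le_eq)
next
  case (Suc k)
  then obtain n where n: "psum \<alpha> n \<le> k" "k < psum \<alpha> (Suc n)" by blast
  show ?case
  proof (cases "Suc k < psum \<alpha> (Suc n)")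
    case True then show ?thesis using n by (intro exI[of _ n]) auto
  next
    case False
    then have "Suc k = psum \<alpha> (Suc n)" using n by linarith
    moreover have "\<alpha> (Suc n) \<ge> 1" using Suc.prems by blast
    ultimately show ?thesis by (intro exI[of _ "Suc n"]) (auto simp: psum_Suc[of _ "Suc n"])
  qed
qed

lemma seq_lt: "\<alpha> \<in> Seqs q u \<Longrightarrow> \<alpha> n < q"
proof -
  assume a: "\<alpha> \<in> Seqs q u"
  then have "1 \<le> \<alpha> n" "\<alpha> n \<le> q - 1" using SeqsD by blast+
  then show ?thesis by linarith
qed

lemma dig_blk: "\<alpha> \<in> Seqs q u \<Longrightarrow> u < q \<Longrightarrow> dig q (blockdigits u \<alpha>)"
  unfolding dig_def blockdigits_def using seq_lt by auto

lemma dig_seq: "\<alpha> \<in> Seqs q u \<Longrightarrow> dig q \<alpha>"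
  unfolding dig_def using seq_lt by blast

lemma good_seq: "\<alpha> \<in> Seqs q u \<Longrightarrow> good q \<alpha>"
  unfolding good_def
proof
  fix m assume a: "\<alpha> \<in> Seqs q u"
  show "\<exists>j\<ge>m. \<alpha> j = \<alpha> (Suc j) \<or> 0 < \<alpha> j \<and> \<alpha> j < q - 1"
  proof (cases "\<alpha> m < q - 1")
    case True then show ?thesis using SeqsD[OF a, of m] by (intro exI[of _ m]) auto
  next
    case False
    then have e: "\<alpha> m = q - 1" using SeqsD[OF a, of m] by simp
    show ?thesis
    proof (cases "\<alpha> (Suc m) < q - 1")
      case True then show ?thesis using SeqsD[OF a, of "Suc m"] by (intro exI[of _ "Suc m"]) auto
    next
      case False
      then have "\<alpha> (Suc m) = q - 1" using SeqsD[OF a, of "Suc m"] by simp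
      then show ?thesis using e by (intro exI[of _ m]) auto
    qed
  qed
qed

lemma good_blk:
  assumes a: "\<alpha> \<in> Seqs q u" and q: "q > 3"
  shows "good q (blockdigits u \<alpha>)"
  unfolding good_def
proof
  fix m
  have a1: "\<forall>i. \<alpha> i \<ge> 1" using SeqsD[OF a] by blast
  have pm: "m \<le> psum \<alpha> m" by (rule psum_ge[OF a1])
  show "\<exists>j\<ge>m. blockdigits u \<alpha> j = blockdigits u \<alpha> (Suc j) \<or> 0 < blockdigits u \<alpha> j \<and> blockdigits u \<alpha> j < q - 1"
  proof (cases "\<alpha> m < q - 1")
    case True
    define j where "j = psum \<alpha> (Suc m) - 1"
    have "blockdigits u \<alpha> j = \<alpha> m"
      using blk[OF a1, of m j u] a1[rule_format, of m] unfolding j_def by (simp add: psum_Suc)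
    moreover have "j \<ge> m" unfolding j_def using pm SeqsD[OF a, of m] by (simp add: psum_Suc)
    ultimately show ?thesis using True SeqsD[OF a, of m] by (intro exI[of _ j]) auto
  next
    case False
    then have e: "\<alpha> m = q - 1" using SeqsD[OF a, of m] by simp
    define j where "j = psum \<alpha> m"
    have "blockdigits u \<alpha> j = u"
      using blk[OF a1, of m j u] e q unfolding j_def by (simp add: psum_Suc)
    moreover have "blockdigits u \<alpha> (Suc j) = u"
      using blk[OF a1, of m "Suc j" u] e q unfolding j_def by (simp add: psum_Suc)
    ultimately show ?thesis using pm unfolding j_def by (intro exI[of _ "psum \<alpha> m"]) auto
  qed
qed

lemma determine:
  assumes a: "\<alpha> \<in> Seqs q u" and b: "\<beta> \<in> Seqs q u"
    and eq: "\<forall>k<psum \<alpha> N. blockdigits u \<alpha> k = blockdigits u \<beta> k"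
  shows "\<forall>i<N. \<alpha> i = \<beta> i"
proof -
  have a1: "\<forall>i. \<alpha> i \<ge> 1" using SeqsD[OF a] by blast
  have b1: "\<forall>i. \<beta> i \<ge> 1" using SeqsD[OF b] by blast
  have "n \<le> N \<longrightarrow> psum \<alpha> n = psum \<beta> n \<and> (\<forall>i<n. \<alpha> i = \<beta> i)" for n
  proof (induction n)
    case 0 then show ?case by (simp add: psum_0)
  next
    case (Suc n)
    show ?case
    proof
      assume sn: "Suc n \<le> N"
      then have IH: "psum \<alpha> n = psum \<beta> n" "\<forall>i<n. \<alpha> i = \<beta> i" using Suc by auto
      define P where "P = psum \<alpha> n"
      have PN: "psum \<alpha> (Suc n) \<le> psum \<alpha> N" using psum_mono[OF a1 sn] .
      have "\<alpha> n = \<beta> n"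
      proof (rule ccontr)
        assume ne: "\<alpha> n \<noteq> \<beta> n"
        show False
        proof (cases "\<alpha> n < \<beta> n")
          case True
          define j where "j = P + \<alpha> n - 1"
          have "blockdigits u \<alpha> j = \<alpha> n"
            using blk[OF a1, of n j u] a1[rule_format, of n] unfolding j_def P_def by (simp add: psum_Suc)
          moreover have "blockdigits u \<beta> j = u"
            using blk[OF b1, of n j u] SeqsD[OF a, of n] True IH(1) unfolding j_def P_def by (simp add: psum_Suc)
          moreover have "j < psum \<alpha> N" using PN SeqsD[OF a, of n] unfolding j_def P_def by (simp add: psum_Suc)
          ultimately show False using eq SeqsD[OF a, of n] by auto
        next
          case False
          then have lt: "\<beta> n < \<alpha> n" using ne by simp
          define j where "j = P + \<beta> n - 1"
          have "blockdigits u \<beta> j = \<beta> n"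
            using blk[OF b1, of n j u] SeqsD[OF b, of n] IH(1) unfolding j_def P_def by (simp add: psum_Suc)
          moreover have "blockdigits u \<alpha> j = u"
            using blk[OF a1, of n j u] SeqsD[OF b, of n] lt unfolding j_def P_def by (simp add: psum_Suc)
          moreover have "j < psum \<alpha> N" using PN SeqsD[OF b, of n] lt unfolding j_def P_def by (simp add: psum_Suc)
          ultimately show False using eq SeqsD[OF b, of n] by auto
        qed
      qed
      then show "psum \<alpha> (Suc n) = psum \<beta> (Suc n) \<and> (\<forall>i<Suc n. \<alpha> i = \<beta> i)"
        using IH by (auto simp: psum_Suc less_Suc_eq)
    qed
  qed
  then show ?thesis by blast
qed


theorem theorem3p1:
  fixes q u :: nat
  assumes "q > 3" and "u < q"
  shows "inj_on (xval q u) (Seqs q u)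
    \<and> (\<forall>\<alpha>\<in>Seqs q u. \<forall>\<beta>. (\<forall>k. \<beta> k < q) \<and> negaq q \<beta> = xval q u \<alpha>
           \<longrightarrow> \<beta> = blockdigits u \<alpha>)
    \<and> bij_betw (h q u) (Dh q u) (Eh q u)
    \<and> (\<forall>x\<in>Dh q u. continuous (at x within Dh q u) (h q u))"
proof -
  note q = assms(1)
  have q1: "q > 1" using q by simp
  have D1: "dig q (blockdigits u \<alpha>)" "good q (blockdigits u \<alpha>)" "dig q \<alpha>" "good q \<alpha>"
    if "\<alpha> \<in> Seqs q u" for \<alpha>
    using dig_blk[OF that assms(2)] good_blk[OF that q] dig_seq[OF that] good_seq[OF that] by auto
  have C2: "\<forall>\<alpha>\<in>Seqs q u. \<forall>\<beta>. (\<forall>k. \<beta> k < q) \<and> negaq q \<beta> = xval q u \<alpha>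
           \<longrightarrow> \<beta> = blockdigits u \<alpha>"
  proof (intro ballI allI impI)
    fix \<alpha> \<beta> assume a: "\<alpha> \<in> Seqs q u" and b: "(\<forall>k. \<beta> k < q) \<and> negaq q \<beta> = xval q u \<alpha>"
    have "blockdigits u \<alpha> = \<beta>"
      by (rule uniq[OF D1(1,2)[OF a] _ q]) (use b in \<open>auto simp: dig_def xval_def\<close>)
    then show "\<beta> = blockdigits u \<alpha>" by simp
  qed
  have C1: "inj_on (xval q u) (Seqs q u)"
  proof (rule inj_onI)
    fix \<alpha> \<beta> assume a: "\<alpha> \<in> Seqs q u" and b: "\<beta> \<in> Seqs q u" and e: "xval q u \<alpha> = xval q u \<beta>"
    have bd: "blockdigits u \<alpha> = blockdigits u \<beta>"
      by (rule uniq[OF D1(1,2)[OF a] D1(1)[OF b] q]) (use e in \<open>simp add: xval_def\<close>)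
    show "\<alpha> = \<beta>"
    proof
      fix i
      show "\<alpha> i = \<beta> i" using determine[OF a b, of "Suc i"] bd by simp
    qed
  qed
  have hx: "h q u (xval q u \<alpha>) = negaq q \<alpha>" if a: "\<alpha> \<in> Seqs q u" for \<alpha>
  proof -
    have "(THE \<beta>. \<beta> \<in> Seqs q u \<and> xval q u \<beta> = xval q u \<alpha>) = \<alpha>"
      by (rule the_equality) (use a C1 in \<open>auto dest: inj_onD\<close>)
    then show ?thesis unfolding h_def by simp
  qed
  have C3: "bij_betw (h q u) (Dh q u) (Eh q u)"
    unfolding bij_betw_def
  proof
    show "inj_on (h q u) (Dh q u)"
    proof (rule inj_onI)
      fix x y assume "x \<in> Dh q u" "y \<in> Dh q u" and e: "h q u x = h q u y"
      then obtain \<alpha> \<beta> where a: "\<alpha> \<in> Seqs q u" "x = xval q u \<alpha>" and b: "\<beta> \<in> Seqs q u" "y = xval q u \<beta>"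
        unfolding Dh_def by blast
      have "negaq q \<alpha> = negaq q \<beta>" using e hx a b by simp
      then have "\<alpha> = \<beta>" by (rule uniq[OF D1(3,4)[OF a(1)] D1(3)[OF b(1)] q])
      then show "x = y" using a b by simp
    qed
    show "h q u ` Dh q u = Eh q u"
      unfolding Dh_def Eh_def image_image using hx by (auto intro: image_cong)
  qed
  have C4: "\<forall>x\<in>Dh q u. continuous (at x within Dh q u) (h q u)"
  proof
    fix x assume "x \<in> Dh q u"
    then obtain \<alpha> where a: "\<alpha> \<in> Seqs q u" and x: "x = xval q u \<alpha>" unfolding Dh_def by blast
    show "continuous (at x within Dh q u) (h q u)"
      unfolding continuous_within_eps_delta
    proof (intro allI impI)
      fix \<epsilon> :: real assume e: "\<epsilon> > 0"
      obtain N where N: "1 / \<epsilon> < real q ^ N" using real_arch_pow[of "real q" "1 / \<epsilon>"] q1 by auto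
      have qN: "real q ^ N > 0" using q1 by simp
      have N': "1 / real q ^ N < \<epsilon>" using N e qN by (simp add: field_simps)
      obtain \<delta> where d: "\<delta> > 0" and dd: "\<forall>b. dig q b \<and> \<bar>negaq q b - negaq q (blockdigits u \<alpha>)\<bar> < \<delta>
          \<longrightarrow> (\<forall>i<psum \<alpha> N. b i = blockdigits u \<alpha> i)"
        using sep[OF D1(1,2)[OF a] q] by blast
      show "\<exists>\<delta>>0. \<forall>x'\<in>Dh q u. dist x' x < \<delta> \<longrightarrow> dist (h q u x') (h q u x) < \<epsilon>"
      proof (intro exI[of _ \<delta>] conjI ballI impI)
        show "\<delta> > 0" by (rule d)
        fix y assume "y \<in> Dh q u" and dy: "dist y x < \<delta>"
        then obtain \<beta> where b: "\<beta> \<in> Seqs q u" and y: "y = xval q u \<beta>" unfolding Dh_def by blast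
        have "\<forall>i<psum \<alpha> N. blockdigits u \<beta> i = blockdigits u \<alpha> i"
          using dd D1(1)[OF b] dy unfolding x y xval_def dist_real_def by blast
        then have "\<forall>i<N. \<alpha> i = \<beta> i" using determine[OF a b, of N] by simp
        then have "\<bar>negaq q \<beta> - negaq q \<alpha>\<bar> \<le> 1 / real q ^ N"
          using close[OF D1(3)[OF b] D1(3)[OF a] q1, of N] by simp
        then show "dist (h q u y) (h q u x) < \<epsilon>"
          unfolding x y dist_real_def using hx[OF a] hx[OF b] N' by simp
      qed
    qed
  qed
  show ?thesis using C1 C2 C3 C4 by blast
qed

end
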